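(* Let $\alpha\in(0,2]$, $c>0$, $a>0$. The centered Gaussian process $\{G^{\alpha,c,a}(s):s\in[0,\infty)\}$ with covariance $\mathrm{Cov}(G^{\alpha,c,a}(s),G^{\alpha,c,a}(r))=\frac12\big(f^{\alpha,c,a}(s)+f^{\alpha,c,a}(r)-f^{\alpha,c,a}(|s-r|)\big)$ has stationary increments (with $\mathrm{Var}(G^{\alpha,c,a}(s)-G^{\alpha,c,a}(r))=f^{\alpha,c,a}(|s-r|)$), and its increments over disjoint intervals are negatively correlated: for all $s,r,u\ge0$, $$\mathrm{Cov}\big(G^{\alpha,c,a}(s)-G^{\alpha,c,a}(0),\,G^{\alpha,c,a}(r+s+u)-G^{\alpha,c,a}(s+u)\big)\le0.$$
   Context: Define $f^{\alpha,c,a}(0)=0$ and for $s>0$, $f^{\alpha,c,a}(s)=\frac{4s}{a\pi}\int_0^\infty\frac{\sin^2(u/2)}{u^2}(1-e^{-2c(u/s)^\alpha})\,\mathrm{d}u$. *)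

theory Defs
  imports "HOL-Probability.Probability"
begin

text \<open>The function f^{alpha,c,a}; the integral over [0,oo) is the (absolutely convergent)
  Henstock-Kurzweil/Lebesgue integral; the integrand's value at u = 0 is irrelevant.\<close>
definition f_fun :: "real \<Rightarrow> real \<Rightarrow> real \<Rightarrow> real \<Rightarrow> real" where
  "f_fun \<alpha> c a s = (if s = 0 then 0 else
     4 * s / (a * pi) * integral {0..} (\<lambda>u. (sin (u / 2))\<^sup>2 / u\<^sup>2 *
        (1 - exp (- 2 * c * (u / s) powr \<alpha>))))"

definition G_cov :: "real \<Rightarrow> real \<Rightarrow> real \<Rightarrow> real \<Rightarrow> real \<Rightarrow> real" where
  "G_cov \<alpha> c a s r = (f_fun \<alpha> c a s + f_fun \<alpha> c a r - f_fun \<alpha> c a \<bar>s - r\<bar>) / 2"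

definition covar :: "'a measure \<Rightarrow> ('a \<Rightarrow> real) \<Rightarrow> ('a \<Rightarrow> real) \<Rightarrow> real" where
  "covar M X Y = integral\<^sup>L M (\<lambda>x. (X x - integral\<^sup>L M X) * (Y x - integral\<^sup>L M Y))"

definition centered_gaussian_process :: "'a measure \<Rightarrow> (real \<Rightarrow> 'a \<Rightarrow> real) \<Rightarrow> bool" where
  "centered_gaussian_process M G \<longleftrightarrow>
     (\<forall>s\<ge>0. G s \<in> borel_measurable M \<and> integrable M (\<lambda>x. (G s x)\<^sup>2) \<and> integral\<^sup>L M (G s) = 0) \<and>
     (\<forall>T w. finite T \<and> T \<subseteq> {0..} \<longrightarrow>
        (AE x in M. (\<Sum>t\<in>T. w t * G t x) = 0) \<or>
        (\<exists>\<sigma>>0. distributed M lborel (\<lambda>x. \<Sum>t\<in>T. w t * G t x) (\<lambda>y. ennreal (normal_density 0 \<sigma> y))))"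

end

theory Submission
  imports Defs
begin

lemma sinsq_LBINT:
  shows "set_integrable lborel (einterval 0 \<infinity>) (\<lambda>x::real. (sin x)\<^sup>2 / x\<^sup>2)"
    and "(LBINT x=0..\<infinity>. (sin x)\<^sup>2 / x\<^sup>2) = pi / 2"
proof -
  define F where "F x = Si (2 * x) - sin x * (sin x / x)" for x :: real
  have D: "DERIV F x :> (sin x)\<^sup>2 / x\<^sup>2" if "0 < x" for x :: real
  proof -
    show ?thesis
      unfolding F_def using that
      apply (auto intro!: derivative_eq_intros DERIV_Si[THEN DERIV_chain2] simp: power2_eq_square)
      apply (simp add: field_simps power2_eq_square)
      apply (metis sin_double mult.commute mult.assoc)
      done
  qed
  have A: "((F \<circ> real_of_ereal) \<longlongrightarrow> 0) (at_right (ereal 0))"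
  proof -
    have Si0: "Si 0 = 0" unfolding Si_def by (simp add: zero_ereal_def)
    have cSi: "continuous_on UNIV Si" using isCont_Si continuous_at_imp_continuous_on by blast
    have "continuous_on UNIV (\<lambda>x. Si (2*x) - sin x * sinc x)"
      by (intro continuous_intros continuous_on_compose2[OF cSi]) auto
    then have "isCont (\<lambda>x. Si (2*x) - sin x * sinc x) 0"
      by (simp add: continuous_on_eq_continuous_at)
    then have "((\<lambda>x. Si (2*x) - sin x * sinc x) \<longlongrightarrow> Si (2*0) - sin 0 * sinc 0) (at_right 0)"
      unfolding isCont_def by (rule tendsto_mono[OF at_le, rotated]) auto
    moreover have e: "Si (2*0) - sin 0 * sinc 0 = 0"
      using Si0 by (simp only: mult_zero_right sin_zero mult_zero_left diff_zero)
    ultimately have L: "((\<lambda>x. Si (2*x) - sin x * sinc x) \<longlongrightarrow> 0) (at_right 0)"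
      by (simp only:)
    have "((\<lambda>x. F x) \<longlongrightarrow> 0) (at_right 0)"
    proof (rule Lim_transform_eventually[OF L])
      show "\<forall>\<^sub>F x in at_right 0. Si (2*x) - sin x * sinc x = F x"
        by (rule eventually_at_rightI[of 0 1]) (auto simp: F_def)
    qed
    then show ?thesis by (simp add: ereal_tendsto_simps)
  qed
  have B: "((F \<circ> real_of_ereal) \<longlongrightarrow> pi/2) (at_left \<infinity>)"
  proof -
    have 1: "((\<lambda>x. Si (2 * x)) \<longlongrightarrow> pi/2) at_top"
      by (rule filterlim_compose[OF Si_at_top]) (intro filterlim_tendsto_pos_mult_at_top tendsto_const filterlim_ident, auto)
    have 2: "((\<lambda>x::real. sin x * (sin x / x)) \<longlongrightarrow> 0) at_top"
    proof (rule Lim_null_comparison)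
      show "\<forall>\<^sub>F x in at_top. norm (sin x * (sin x / x)) \<le> 1 / x"
        using eventually_gt_at_top[of 0]
      proof eventually_elim
        case (elim x)
        have "\<bar>sin x\<bar> * \<bar>sin x\<bar> \<le> 1" by (rule mult_le_one) (auto simp: abs_sin_le_one)
        then show ?case using elim by (simp add: abs_mult divide_simps)
      qed
      show "((\<lambda>x::real. 1 / x) \<longlongrightarrow> 0) at_top" by real_asymp
    qed
    show ?thesis unfolding F_def using tendsto_diff[OF 1 2] by (simp add: ereal_tendsto_simps)
  qed
  note * = interval_integral_FTC_nonneg[of 0 \<infinity> F "\<lambda>x. (sin x)\<^sup>2 / x\<^sup>2" 0 "pi/2"]
  show "set_integrable lborel (einterval 0 \<infinity>) (\<lambda>x::real. (sin x)\<^sup>2 / x\<^sup>2)"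
    using * D A B by (auto simp: zero_ereal_def)
  show "(LBINT x=0..\<infinity>. (sin x)\<^sup>2 / x\<^sup>2) = pi / 2"
    using * D A B by (auto simp: zero_ereal_def)
qed

lemma sinsq_base:
  "has_bochner_integral lborel (\<lambda>x::real. indicator {0<..} x * ((sin x)\<^sup>2 / x\<^sup>2)) (pi/2)"
proof -
  have "set_integrable lborel {0<..} (\<lambda>x::real. (sin x)\<^sup>2 / x\<^sup>2)"
    using sinsq_LBINT(1) by (simp add: einterval_def zero_ereal_def greaterThan_def)
  moreover have "(LINT x:{0<..}|lborel. (sin x)\<^sup>2 / x\<^sup>2) = pi/2"
    using sinsq_LBINT(2) by (simp add: interval_lebesgue_integral_0_infty)
  ultimately show ?thesis
    by (simp add: set_integrable_def set_lebesgue_integral_def has_bochner_integral_iff)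
qed

lemma sinsq_scaled:
  fixes a :: real assumes a: "0 \<le> a"
  shows "has_bochner_integral lborel (\<lambda>x::real. indicator {0<..} x * ((sin (a*x))\<^sup>2 / x\<^sup>2)) (a*pi/2)"
proof (cases "a = 0")
  case True then show ?thesis by (simp add: has_bochner_integral_zero)
next
  case False
  with a have a: "0 < a" by simp
  define f where "f x = indicator {0<..} x * ((sin x)\<^sup>2 / x\<^sup>2)" for x :: real
  have fi: "integrable lborel f" and fI: "integral\<^sup>L lborel f = pi/2"
    using sinsq_base unfolding f_def has_bochner_integral_iff by auto
  have eq: "(\<lambda>x. indicator {0<..} x * ((sin (a*x))\<^sup>2 / x\<^sup>2)) = (\<lambda>x. (a*a) * f (0 + a * x))"
  proof
    fix x :: real
    show "indicator {0<..} x * ((sin (a*x))\<^sup>2 / x\<^sup>2) = (a*a) * f (0 + a * x)"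
      using a by (cases "x = 0") (auto simp: f_def indicator_def zero_less_mult_iff power2_eq_square field_simps)
  qed
  have i2: "integrable lborel (\<lambda>x. f (0 + a * x))"
    using lborel_integrable_real_affine[OF fi, of a 0] a by simp
  have "integral\<^sup>L lborel f = a * (\<integral>x. f (0 + a * x) \<partial>lborel)"
    using lborel_integral_real_affine[of a f 0] a by simp
  then have "(\<integral>x. f (0 + a * x) \<partial>lborel) = pi / 2 / a" using fI a by (simp add: field_simps)
  then show ?thesis unfolding eq using i2 a
    by (simp add: has_bochner_integral_iff field_simps)
qed

lemma sin_sq_prod_identity:
  fixes A B :: real
  shows "4 * (sin A)\<^sup>2 * (sin B)\<^sup>2 = 2*(sin A)\<^sup>2 + 2*(sin B)\<^sup>2 - (sin (A+B))\<^sup>2 - (sin (A-B))\<^sup>2"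
proof -
  have cA: "(cos A)\<^sup>2 = 1 - (sin A)\<^sup>2" and cB: "(cos B)\<^sup>2 = 1 - (sin B)\<^sup>2"
    by (simp_all add: cos_squared_eq)
  show ?thesis using cA cB unfolding sin_add sin_diff power2_eq_square
    by algebra
qed

definition kk :: "real \<Rightarrow> real" where
  "kk u = indicator {0<..} u * ((sin (u/2))\<^sup>2 / u\<^sup>2)"

lemma kk_nonneg: "0 \<le> kk u"
  by (simp add: kk_def)

lemma kk_integral_cos:
  fixes b :: real
  shows "has_bochner_integral lborel (\<lambda>u. kk u * (1 - cos (b * u))) (pi/4 * min 1 \<bar>b\<bar>)"
proof -
  define c where "c = \<bar>b\<bar>"
  have c: "0 \<le> c" by (simp add: c_def)
  have cb: "cos (b * u) = cos (c * u)" for u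
    by (cases "b \<ge> 0") (auto simp: c_def)
  define S where "S a x = indicator {0<..} x * ((sin (a*x))\<^sup>2 / x\<^sup>2)" for a x :: real
  have S: "has_bochner_integral lborel (S a) (a*pi/2)" if "0 \<le> a" for a
    using sinsq_scaled[OF that] unfolding S_def by simp
  have pt: "kk u * (1 - cos (c * u)) =
     (2 * S (1/2) u + 2 * S (c/2) u - S ((1+c)/2) u - S (\<bar>1-c\<bar>/2) u) / 2" for u
  proof -
    have sq: "(sin (\<bar>1-c\<bar>/2 * u))\<^sup>2 = (sin (u/2 - c*u/2))\<^sup>2"
    proof (cases "c \<le> 1")
      case True
      then have "\<bar>1-c\<bar>/2 * u = u/2 - c*u/2" by (simp add: field_simps)
      then show ?thesis by (simp only:)
    next
      case False
      then have "\<bar>1-c\<bar>/2 * u = - (u/2 - c*u/2)" by (simp add: field_simps)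
      then show ?thesis by (simp only: sin_minus) simp
    qed
    show ?thesis
    proof (cases "u > 0")
      case False then show ?thesis by (simp add: kk_def S_def)
    next
      case True
      have cs: "1 - cos (c*u) = 2 * (sin (c*u/2))\<^sup>2"
        using cos_double_sin[of "c*u/2"] by simp
      have I: "4 * (sin (u/2))\<^sup>2 * (sin (c*u/2))\<^sup>2 = 2*(sin (u/2))\<^sup>2 + 2*(sin (c*u/2))\<^sup>2 - (sin (u/2 + c*u/2))\<^sup>2 - (sin (u/2 - c*u/2))\<^sup>2"
        by (rule sin_sq_prod_identity)
      have e1: "1/2*u = u/2" and e2: "c/2*u = c*u/2" and e3: "(1+c)/2*u = u/2 + c*u/2"
        by (simp_all add: field_simps)
      have "kk u * (1 - cos (c * u)) = (sin (u/2))\<^sup>2 / u\<^sup>2 * (2 * (sin (c*u/2))\<^sup>2)"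
        unfolding kk_def cs using True by simp
      also have "\<dots> = (4 * (sin (u/2))\<^sup>2 * (sin (c*u/2))\<^sup>2) / (2 * u\<^sup>2)"
        by (simp add: field_simps)
      also have "\<dots> = (2*(sin (u/2))\<^sup>2 + 2*(sin (c*u/2))\<^sup>2 - (sin (u/2 + c*u/2))\<^sup>2 - (sin (u/2 - c*u/2))\<^sup>2) / (2 * u\<^sup>2)"
        unfolding I ..
      also have "\<dots> = (2 * S (1/2) u + 2 * S (c/2) u - S ((1+c)/2) u - S (\<bar>1-c\<bar>/2) u) / 2"
        unfolding S_def sq e1 e2 e3 using True by (simp add: field_simps)
      finally show ?thesis .
    qed
  qed
  have "has_bochner_integral lborel (\<lambda>u. (2 * S (1/2) u + 2 * S (c/2) u - S ((1+c)/2) u - S (\<bar>1-c\<bar>/2) u) / 2)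
     ((2 * (1/2*pi/2) + 2 * (c/2*pi/2) - ((1+c)/2*pi/2) - (\<bar>1-c\<bar>/2*pi/2)) / 2)"
    using c by (intro has_bochner_integral_divide_zero has_bochner_integral_diff has_bochner_integral_add
        has_bochner_integral_mult_right S) auto
  moreover have "(2 * (1/2*pi/2) + 2 * (c/2*pi/2) - ((1+c)/2*pi/2) - (\<bar>1-c\<bar>/2*pi/2)) / 2 = pi/4 * min 1 c"
    by (cases "c \<le> 1") (auto simp: field_simps min_def)
  ultimately have H: "has_bochner_integral lborel (\<lambda>u. (2 * S (1/2) u + 2 * S (c/2) u - S ((1+c)/2) u - S (\<bar>1-c\<bar>/2) u) / 2) (pi/4 * min 1 c)"
    by (simp only:)
  show ?thesis unfolding cb pt c_def[symmetric] by (rule H)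
qed

definition H :: "(real \<Rightarrow> real) \<Rightarrow> real \<Rightarrow> real" where
  "H \<phi> s = s * (\<integral>u. kk u * (1 - \<phi> (u / s)) \<partial>lborel)"

lemma kk_measurable[measurable]: "kk \<in> borel_measurable borel"
  unfolding kk_def by measurable

lemma H_char:
  assumes P: "prob_space P" and S[measurable]: "S \<in> borel_measurable P" and s: "0 \<le> s"
  shows "H (\<lambda>v. \<integral>\<omega>. cos (v * S \<omega>) \<partial>P) s = pi/4 * (\<integral>\<omega>. min s \<bar>S \<omega>\<bar> \<partial>P)"
proof (cases "s = 0")
  case True then show ?thesis by (simp add: H_def)
next
  case False
  with s have s: "0 < s" by simp
  interpret P: prob_space P by fact
  interpret pair_sigma_finite P lborel
    by (simp add: pair_sigma_finite_def P.sigma_finite_measure_axioms lborel.sigma_finite_measure_axioms)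
  define g where "g \<omega> u = kk u * (1 - cos (u / s * S \<omega>))" for \<omega> u
  have gm[measurable]: "(\<lambda>(\<omega>, u). g \<omega> u) \<in> borel_measurable (P \<Otimes>\<^sub>M lborel)"
    unfolding g_def by measurable
  have gI: "has_bochner_integral lborel (g \<omega>) (pi/4 * min 1 \<bar>S \<omega> / s\<bar>)" for \<omega>
  proof -
    have "g \<omega> = (\<lambda>u. kk u * (1 - cos ((S \<omega> / s) * u)))"
      by (auto simp: g_def fun_eq_iff mult.commute)
    then show ?thesis using kk_integral_cos[of "S \<omega> / s"] by simp
  qed
  have g_nonneg: "0 \<le> g \<omega> u" for \<omega> u
    unfolding g_def by (intro mult_nonneg_nonneg kk_nonneg) auto
  have int_prod: "integrable (P \<Otimes>\<^sub>M lborel) (\<lambda>(\<omega>, u). g \<omega> u)"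
  proof (rule Fubini_integrable)
    show "(\<lambda>(\<omega>, u). g \<omega> u) \<in> borel_measurable (P \<Otimes>\<^sub>M lborel)" by (rule gm)
    have eq: "(\<lambda>\<omega>. \<integral>u. norm (case (\<omega>, u) of (\<omega>, u) \<Rightarrow> g \<omega> u) \<partial>lborel) = (\<lambda>\<omega>. pi/4 * min 1 \<bar>S \<omega> / s\<bar>)"
      using gI g_nonneg by (auto simp: fun_eq_iff has_bochner_integral_iff)
    show "integrable P (\<lambda>\<omega>. \<integral>u. norm (case (\<omega>, u) of (\<omega>, u) \<Rightarrow> g \<omega> u) \<partial>lborel)"
      unfolding eq
      by (rule P.integrable_const_bound[where B="pi/4"]) auto
    show "AE \<omega> in P. integrable lborel (\<lambda>u. case (\<omega>, u) of (\<omega>, u) \<Rightarrow> g \<omega> u)"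
      using gI by (auto simp: has_bochner_integral_iff)
  qed
  have F: "(\<integral>u. (\<integral>\<omega>. g \<omega> u \<partial>P) \<partial>lborel) = (\<integral>\<omega>. (\<integral>u. g \<omega> u \<partial>lborel) \<partial>P)"
    using Fubini_integral[of "\<lambda>\<omega> u. g \<omega> u"] int_prod by simp
  have inner: "(\<integral>\<omega>. g \<omega> u \<partial>P) = kk u * (1 - (\<integral>\<omega>. cos (u / s * S \<omega>) \<partial>P))" for u
  proof -
    have ic: "integrable P (\<lambda>\<omega>. cos (u / s * S \<omega>))"
      by (rule P.integrable_const_bound[where B=1]) auto
    have "(\<integral>\<omega>. g \<omega> u \<partial>P) = kk u * (\<integral>\<omega>. (1 - cos (u / s * S \<omega>)) \<partial>P)"
      unfolding g_def by simp
    also have "(\<integral>\<omega>. (1 - cos (u / s * S \<omega>)) \<partial>P) = 1 - (\<integral>\<omega>. cos (u / s * S \<omega>) \<partial>P)"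
      using ic by (simp add: P.prob_space)
    finally show ?thesis .
  qed
  have outer: "(\<integral>\<omega>. (\<integral>u. g \<omega> u \<partial>lborel) \<partial>P) = (\<integral>\<omega>. min s \<bar>S \<omega>\<bar> \<partial>P) * (pi / 4) / s"
  proof -
    have "(\<integral>\<omega>. (\<integral>u. g \<omega> u \<partial>lborel) \<partial>P) = (\<integral>\<omega>. min s \<bar>S \<omega>\<bar> * (pi/4) / s \<partial>P)"
    proof (rule Bochner_Integration.integral_cong[OF refl])
      fix \<omega>
      have m: "min 1 (t / s) = min s t / s" for t
        using s by (auto simp: min_def le_divide_eq)
      have "\<bar>S \<omega> / s\<bar> = \<bar>S \<omega>\<bar> / s" using s by simp
      then have "min 1 \<bar>S \<omega> / s\<bar> = min s \<bar>S \<omega>\<bar> / s" using m by (simp only:)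
      then show "(\<integral>u. g \<omega> u \<partial>lborel) = min s \<bar>S \<omega>\<bar> * (pi/4) / s"
        using gI[of \<omega>] by (simp add: has_bochner_integral_iff)
    qed
    also have "\<dots> = (\<integral>\<omega>. min s \<bar>S \<omega>\<bar> \<partial>P) * (pi / 4) / s"
      by simp
    finally show ?thesis .
  qed
  show ?thesis
    unfolding H_def using F inner outer s by simp
qed

definition Good :: "(real \<Rightarrow> real) \<Rightarrow> bool" where
  "Good \<phi> \<longleftrightarrow> (\<forall>s r u. 0 \<le> s \<longrightarrow> 0 \<le> r \<longrightarrow> 0 \<le> u \<longrightarrow>
      H \<phi> (r+s+u) + H \<phi> u \<le> H \<phi> (r+u) + H \<phi> (s+u))"

lemma min_Q:
  fixes X r s u :: real
  assumes "0 \<le> s" "0 \<le> r" "0 \<le> u"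
  shows "min (r+s+u) X + min u X \<le> min (r+u) X + min (s+u) X"
  using assms by (auto simp: min_def)

lemma pi_mono: "a + b \<le> c + d \<Longrightarrow> pi*a/4 + pi*b/4 \<le> pi*c/4 + pi*(d::real)/4"
proof -
  assume "a + b \<le> c + d"
  then have "pi/4*(a+b) \<le> pi/4*(c+d)" by (rule mult_left_mono) simp
  then show ?thesis by (simp add: algebra_simps)
qed

lemma Good_char:
  assumes P: "prob_space P" and S[measurable]: "S \<in> borel_measurable P"
  shows "Good (\<lambda>v. \<integral>\<omega>. cos (v * S \<omega>) \<partial>P)"
  unfolding Good_def
proof (intro allI impI)
  fix s r u :: real assume "0 \<le> s" "0 \<le> r" "0 \<le> u"
  interpret P: prob_space P by fact
  have int: "integrable P (\<lambda>\<omega>. min t \<bar>S \<omega>\<bar>)" if "0 \<le> t" for t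
    by (rule P.integrable_const_bound[where B=t]) (use that in auto)
  have "(\<integral>\<omega>. min (r+s+u) \<bar>S \<omega>\<bar> \<partial>P) + (\<integral>\<omega>. min u \<bar>S \<omega>\<bar> \<partial>P)
      = (\<integral>\<omega>. min (r+s+u) \<bar>S \<omega>\<bar> + min u \<bar>S \<omega>\<bar> \<partial>P)"
    using int \<open>0 \<le> s\<close> \<open>0 \<le> r\<close> \<open>0 \<le> u\<close> by (simp add: Bochner_Integration.integral_add)
  also have "\<dots> \<le> (\<integral>\<omega>. min (r+u) \<bar>S \<omega>\<bar> + min (s+u) \<bar>S \<omega>\<bar> \<partial>P)"
    using int \<open>0 \<le> s\<close> \<open>0 \<le> r\<close> \<open>0 \<le> u\<close>
    by (intro integral_mono Bochner_Integration.integrable_add min_Q) auto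
  also have "\<dots> = (\<integral>\<omega>. min (r+u) \<bar>S \<omega>\<bar> \<partial>P) + (\<integral>\<omega>. min (s+u) \<bar>S \<omega>\<bar> \<partial>P)"
    using int \<open>0 \<le> s\<close> \<open>0 \<le> r\<close> \<open>0 \<le> u\<close> by (simp add: Bochner_Integration.integral_add)
  finally have "(\<integral>\<omega>. min (r+s+u) \<bar>S \<omega>\<bar> \<partial>P) + (\<integral>\<omega>. min u \<bar>S \<omega>\<bar> \<partial>P)
      \<le> (\<integral>\<omega>. min (r+u) \<bar>S \<omega>\<bar> \<partial>P) + (\<integral>\<omega>. min (s+u) \<bar>S \<omega>\<bar> \<partial>P)" .
  then show "H (\<lambda>v. \<integral>\<omega>. cos (v * S \<omega>) \<partial>P) (r+s+u) + H (\<lambda>v. \<integral>\<omega>. cos (v * S \<omega>) \<partial>P) u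
      \<le> H (\<lambda>v. \<integral>\<omega>. cos (v * S \<omega>) \<partial>P) (r+u) + H (\<lambda>v. \<integral>\<omega>. cos (v * S \<omega>) \<partial>P) (s+u)"
    using \<open>0 \<le> s\<close> \<open>0 \<le> r\<close> \<open>0 \<le> u\<close>
    by (simp add: H_char[OF P S] pi_mono)
qed

lemma kk_integrable: "integrable lborel kk"
proof -
  have "kk = (\<lambda>x. indicator {0<..} x * ((sin (1/2*x))\<^sup>2 / x\<^sup>2))"
    by (auto simp: kk_def fun_eq_iff)
  then show ?thesis using sinsq_scaled[of "1/2"] by (simp add: has_bochner_integral_iff)
qed

lemma H_tendsto:
  assumes bnd: "\<And>n v. \<bar>\<phi>s n v\<bar> \<le> 1"
    and lim: "\<And>v. 0 \<le> v \<Longrightarrow> (\<lambda>n. \<phi>s n v) \<longlonglongrightarrow> \<phi> v"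
    and m1[measurable]: "\<And>n. \<phi>s n \<in> borel_measurable borel"
    and m2[measurable]: "\<phi> \<in> borel_measurable borel"
    and s: "0 \<le> s"
  shows "(\<lambda>n. H (\<phi>s n) s) \<longlonglongrightarrow> H \<phi> s"
proof (cases "s = 0")
  case True then show ?thesis by (simp add: H_def)
next
  case False
  with s have s: "0 < s" by simp
  have "(\<lambda>n. \<integral>u. kk u * (1 - \<phi>s n (u / s)) \<partial>lborel) \<longlonglongrightarrow> (\<integral>u. kk u * (1 - \<phi> (u / s)) \<partial>lborel)"
  proof (rule integral_dominated_convergence[where w="\<lambda>u. 2 * kk u"])
    show "(\<lambda>u. kk u * (1 - \<phi> (u / s))) \<in> borel_measurable lborel" by measurable
    show "(\<lambda>u. kk u * (1 - \<phi>s n (u / s))) \<in> borel_measurable lborel" for n by measurable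
    show "integrable lborel (\<lambda>u. 2 * kk u)" using kk_integrable by simp
    show "AE u in lborel. (\<lambda>n. kk u * (1 - \<phi>s n (u / s))) \<longlonglongrightarrow> kk u * (1 - \<phi> (u / s))"
    proof (rule AE_I2)
      fix u :: real
      show "(\<lambda>n. kk u * (1 - \<phi>s n (u / s))) \<longlonglongrightarrow> kk u * (1 - \<phi> (u / s))"
      proof (cases "0 \<le> u")
        case True
        then have "0 \<le> u / s" using s by simp
        then show ?thesis by (intro tendsto_intros lim)
      next
        case False
        then have "kk u = 0" by (simp add: kk_def)
        then show ?thesis by simp
      qed
    qed
    show "AE u in lborel. norm (kk u * (1 - \<phi>s n (u / s))) \<le> 2 * kk u" for n
    proof (rule AE_I2)
      fix u :: real
      have "\<bar>1 - \<phi>s n (u / s)\<bar> \<le> 2" using bnd[of n "u/s"] by linarith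
      then have "kk u * \<bar>1 - \<phi>s n (u / s)\<bar> \<le> kk u * 2"
        by (intro mult_left_mono kk_nonneg)
      then show "norm (kk u * (1 - \<phi>s n (u / s))) \<le> 2 * kk u"
        using kk_nonneg[of u] by (simp add: abs_mult)
    qed
  qed
  then show ?thesis unfolding H_def by (intro tendsto_intros)
qed

lemma Good_lim:
  assumes G: "\<And>n. Good (\<phi>s n)"
    and bnd: "\<And>n v. \<bar>\<phi>s n v\<bar> \<le> 1"
    and lim: "\<And>v. 0 \<le> v \<Longrightarrow> (\<lambda>n. \<phi>s n v) \<longlonglongrightarrow> \<phi> v"
    and m1: "\<And>n. \<phi>s n \<in> borel_measurable borel"
    and m2: "\<phi> \<in> borel_measurable borel"
  shows "Good \<phi>"
  unfolding Good_def
proof (intro allI impI)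
  fix s r u :: real assume h: "0 \<le> s" "0 \<le> r" "0 \<le> u"
  note T = H_tendsto[OF bnd lim m1 m2]
  have L: "(\<lambda>n. H (\<phi>s n) (r+s+u) + H (\<phi>s n) u) \<longlonglongrightarrow> H \<phi> (r+s+u) + H \<phi> u"
    using h by (intro tendsto_add T) auto
  have R: "(\<lambda>n. H (\<phi>s n) (r+u) + H (\<phi>s n) (s+u)) \<longlonglongrightarrow> H \<phi> (r+u) + H \<phi> (s+u)"
    using h by (intro tendsto_add T) auto
  show "H \<phi> (r+s+u) + H \<phi> u \<le> H \<phi> (r+u) + H \<phi> (s+u)"
    by (rule LIMSEQ_le[OF L R]) (use G h in \<open>auto simp: Good_def\<close>)
qed

lemma hbi_reflect:
  fixes f :: "real \<Rightarrow> real"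
  assumes "has_bochner_integral lborel f (I::real)"
  shows "has_bochner_integral lborel (\<lambda>x. f (- x)) I"
proof -
  have fi: "integrable lborel f" and fI: "integral\<^sup>L lborel f = I"
    using assms by (auto simp: has_bochner_integral_iff)
  have "integrable lborel (\<lambda>x. f (0 + -1 * x))"
    by (rule lborel_integrable_real_affine[OF fi]) simp
  moreover have "integral\<^sup>L lborel f = \<bar>-1\<bar> *\<^sub>R (\<integral>x. f (0 + -1 * x) \<partial>lborel)"
    by (rule lborel_integral_real_affine) simp
  ultimately show ?thesis using fI by (simp add: has_bochner_integral_iff)
qed

lemma hbi_even:
  fixes f :: "real \<Rightarrow> real"
  assumes h: "has_bochner_integral lborel (\<lambda>x. indicator {0<..} x * f x) I"
    and ev: "\<And>x. f (- x) = f x" and f0: "f 0 = 0"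
  shows "has_bochner_integral lborel f (2 * I)"
proof -
  have "has_bochner_integral lborel (\<lambda>x. indicator {0<..} x * f x + indicator {0<..} (-x) * f (-x)) (I + I)"
    using has_bochner_integral_add[OF h hbi_reflect[OF h]] by simp
  moreover have "(\<lambda>x. indicator {0<..} x * f x + indicator {0<..} (-x) * f (-x)) = f"
  proof
    fix x :: real show "indicator {0<..} x * f x + indicator {0<..} (-x) * f (-x) = f x"
    proof (cases x "0::real" rule: linorder_cases)
      case less then show ?thesis using ev[of x] by simp
    next
      case equal then show ?thesis using f0 by simp
    next
      case greater then show ?thesis by simp
    qed
  qed
  ultimately show ?thesis by (simp only: mult_2)
qed

lemma hbi_of_has_integral:
  fixes f :: "real \<Rightarrow> real"
  assumes "(f has_integral I) S" "\<And>x. x \<in> S \<Longrightarrow> 0 \<le> f x" "S \<in> sets borel"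
    and [measurable]: "f \<in> borel_measurable borel"
  shows "has_bochner_integral lborel (\<lambda>x. indicator S x * f x) I"
proof -
  have "integral\<^sup>N lborel (\<lambda>x. indicator S x * f x) = I"
    using nn_integral_has_integral_lebesgue[OF assms(2,1)] by simp
  moreover have "0 \<le> I" using has_integral_nonneg[OF assms(1)] assms(2) by auto
  ultimately show ?thesis
    using assms(2,3)
    by (intro has_bochner_integral_nn_integral) (auto simp: indicator_def)
qed

lemma tail_powr:
  fixes \<alpha> \<epsilon> :: real assumes "0 < \<alpha>" "0 < \<epsilon>"
  shows "has_bochner_integral lborel (\<lambda>x. indicator {\<epsilon>..} x * x powr (-1-\<alpha>)) (\<epsilon> powr (-\<alpha>) / \<alpha>)"
proof -
  have "((\<lambda>x. x powr (-1-\<alpha>)) has_integral -(\<epsilon> powr (-1-\<alpha>+1)) / (-1-\<alpha>+1)) {\<epsilon>..}"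
    using assms by (intro has_integral_powr_to_inf) auto
  then have "((\<lambda>x. x powr (-1-\<alpha>)) has_integral (\<epsilon> powr (-\<alpha>) / \<alpha>)) {\<epsilon>..}"
    by simp
  then show ?thesis
    by (rule hbi_of_has_integral) auto
qed

lemma one_minus_cos_le: "1 - cos (x::real) \<le> x\<^sup>2 / 2"
proof -
  have "1 - cos x = 2 * (sin (x/2))\<^sup>2" using cos_double_sin[of "x/2"] by simp
  also have "(sin (x/2))\<^sup>2 \<le> (x/2)\<^sup>2"
    using abs_sin_x_le_abs_x[of "x/2"] by (metis abs_ge_zero power2_abs power_mono)
  finally show ?thesis by (simp add: power_divide)
qed

lemma lk_integrable_half:
  fixes \<alpha> :: real assumes a: "0 < \<alpha>" "\<alpha> < 2"
  shows "integrable lborel (\<lambda>x. indicator {0<..} x * ((1 - cos x) * x powr (-1-\<alpha>)))"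
proof -
  define h where "h x = indicator {0..1} x * (x powr (1-\<alpha>) / 2) + indicator {1..} x * (2 * x powr (-1-\<alpha>))" for x :: real
  have h1: "has_bochner_integral lborel (\<lambda>x. indicator {0..1} x * (x powr (1-\<alpha>))) (1 powr (1-\<alpha>+1) / (1-\<alpha>+1))"
    using a by (intro hbi_of_has_integral has_integral_powr_from_0) auto
  have h2: "has_bochner_integral lborel (\<lambda>x. indicator {1..} x * x powr (-1-\<alpha>)) (1 powr (-\<alpha>) / \<alpha>)"
    using a by (intro tail_powr) auto
  have "integrable lborel (\<lambda>x. indicator {0..1} x * (x powr (1-\<alpha>)) / 2 + 2 * (indicator {1..} x * x powr (-1-\<alpha>)))"
    using h1 h2 by (intro Bochner_Integration.integrable_add integrable_divide integrable_mult_right) (auto simp: has_bochner_integral_iff)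
  then have hi: "integrable lborel h"
    unfolding h_def by (simp add: algebra_simps)
  have hm: "(\<lambda>x. indicator {0<..} x * ((1 - cos x) * x powr (-1-\<alpha>))) \<in> borel_measurable lborel"
    by measurable
  have hA: "AE x in lborel. norm (indicator {0<..} x * ((1 - cos x) * x powr (- 1 - \<alpha>))) \<le> norm (h x)"
  proof (rule AE_I2)
    fix x :: real
    show "norm (indicator {0<..} x * ((1 - cos x) * x powr (- 1 - \<alpha>))) \<le> norm (h x)"
    proof (cases "x \<le> 0")
      case True then show ?thesis by (simp add: h_def)
    next
      case False
      then have x: "0 < x" by simp
      have c0: "0 \<le> 1 - cos x" by simp
      have lhs: "norm (indicator {0<..} x * ((1 - cos x) * x powr (- 1 - \<alpha>))) = (1 - cos x) * x powr (-1-\<alpha>)"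
        using x c0 by (simp add: abs_mult)
      have n1: "0 \<le> indicator {1..} x * (2 * x powr (-1-\<alpha>))" by simp
      have n2: "0 \<le> indicator {0..1} x * (x powr (1-\<alpha>) / 2)" by simp
      have hx: "h x = indicator {0..1} x * (x powr (1-\<alpha>) / 2) + indicator {1..} x * (2 * x powr (-1-\<alpha>))"
        by (simp add: h_def)
      have hn: "norm (h x) = h x" using n1 n2 hx by simp
      show ?thesis
      proof (cases "x \<le> 1")
        case True
        have "(1 - cos x) * x powr (-1-\<alpha>) \<le> x\<^sup>2 / 2 * x powr (-1-\<alpha>)"
          by (intro mult_right_mono one_minus_cos_le) auto
        also have "x\<^sup>2 / 2 * x powr (-1-\<alpha>) = x powr (1-\<alpha>) / 2"
        proof -
          have "x\<^sup>2 = x powr (real 2)" using powr_realpow[OF x, of 2] by simp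
          then have "x\<^sup>2 * x powr (-1-\<alpha>) = x powr (real 2 + (-1-\<alpha>))"
            by (simp only: powr_add)
          also have "real 2 + (-1-\<alpha>) = 1 - \<alpha>" by simp
          finally show ?thesis by simp
        qed
        also have "x powr (1-\<alpha>) / 2 = indicator {0..1} x * (x powr (1-\<alpha>) / 2)"
          using x True by simp
        finally show ?thesis unfolding lhs hn using n1 hx by linarith
      next
        case False
        have "(1 - cos x) * x powr (-1-\<alpha>) \<le> 2 * x powr (-1-\<alpha>)"
          by (intro mult_right_mono) (auto simp: cos_ge_minus_one)
        also have "2 * x powr (-1-\<alpha>) = indicator {1..} x * (2 * x powr (-1-\<alpha>))"
          using False by simp
        finally show ?thesis unfolding lhs hn using n2 hx by linarith
      qed
    qed
  qed
  show ?thesis by (rule Bochner_Integration.integrable_bound[OF hi hm hA])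
qed

definition LK :: "real \<Rightarrow> real \<Rightarrow> real" where
  "LK \<alpha> x = (1 - cos x) * \<bar>x\<bar> powr (-1-\<alpha>)"

lemma LK_measurable[measurable]: "LK \<alpha> \<in> borel_measurable borel"
  unfolding LK_def by measurable

lemma LK_nonneg: "0 \<le> LK \<alpha> x"
  unfolding LK_def by simp

lemma LK_integrable:
  assumes a: "0 < \<alpha>" "\<alpha> < 2"
  shows "integrable lborel (LK \<alpha>)"
proof -
  have i: "integrable lborel (\<lambda>x. indicator {0<..} x * ((1 - cos x) * x powr (-1-\<alpha>)))"
    by (rule lk_integrable_half[OF a])
  have "(\<lambda>x. indicator {0<..} x * ((1 - cos x) * x powr (-1-\<alpha>))) = (\<lambda>x. indicator {0<..} x * LK \<alpha> x)"
    by (auto simp: fun_eq_iff LK_def indicator_def)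
  with i have "has_bochner_integral lborel (\<lambda>x. indicator {0<..} x * LK \<alpha> x)
      (\<integral>x. indicator {0<..} x * LK \<alpha> x \<partial>lborel)"
    by (simp add: has_bochner_integral_iff)
  then have "has_bochner_integral lborel (LK \<alpha>) (2 * (\<integral>x. indicator {0<..} x * LK \<alpha> x \<partial>lborel))"
    by (rule hbi_even) (simp_all add: LK_def)
  then show ?thesis by (simp add: has_bochner_integral_iff)
qed

lemma LK_pos:
  assumes a: "0 < \<alpha>" "\<alpha> < 2"
  shows "0 < (\<integral>x. LK \<alpha> x \<partial>lborel)"
proof -
  define m where "m = (1 - cos 1) * 2 powr (-1-\<alpha>)"
  have "cos (1::real) < cos 0" by (rule cos_monotone_0_pi) (use pi_ge_two in auto)
  then have c1: "cos (1::real) < 1" by simp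
  then have m: "0 < m" by (simp add: m_def)
  have le: "indicator {1..2} x * m \<le> LK \<alpha> x" for x :: real
  proof (cases "x \<in> {1..2}")
    case True
    then have x: "1 \<le> x" "x \<le> 2" by auto
    have "cos x \<le> cos 1" using x pi_ge_two by (intro cos_monotone_0_pi_le) auto
    then have "1 - cos 1 \<le> 1 - cos x" by simp
    moreover have "2 powr (-1-\<alpha>) \<le> \<bar>x\<bar> powr (-1-\<alpha>)"
      using x a by (intro powr_mono2') auto
    ultimately have "(1 - cos 1) * 2 powr (-1-\<alpha>) \<le> (1 - cos x) * \<bar>x\<bar> powr (-1-\<alpha>)"
      using c1 by (intro mult_mono) auto
    then show ?thesis using True by (simp add: m_def LK_def)
  next
    case False then show ?thesis by (simp add: LK_nonneg)
  qed
  have "(\<integral>x. indicator {1..2::real} x * m \<partial>lborel) \<le> (\<integral>x. LK \<alpha> x \<partial>lborel)"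
    using le LK_integrable[OF a] by (intro integral_mono) auto
  moreover have "(\<integral>x. indicator {1..2::real} x * m \<partial>lborel) = m"
    by simp
  ultimately show ?thesis using m by simp
qed

lemma LK_scale:
  assumes a: "0 < \<alpha>" "\<alpha> < 2" and v: "0 < v"
  shows "integrable lborel (\<lambda>x. (1 - cos (v * x)) * \<bar>x\<bar> powr (-1-\<alpha>))"
    and "(\<integral>x. (1 - cos (v * x)) * \<bar>x\<bar> powr (-1-\<alpha>) \<partial>lborel) = v powr \<alpha> * (\<integral>x. LK \<alpha> x \<partial>lborel)"
proof -
  have eq: "(\<lambda>x. (1 - cos (v * x)) * \<bar>x\<bar> powr (-1-\<alpha>)) = (\<lambda>x. v powr (1+\<alpha>) * LK \<alpha> (0 + v * x))"
  proof
    fix x :: real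
    have e1: "\<bar>v * x\<bar> powr (-1-\<alpha>) = v powr (-1-\<alpha>) * \<bar>x\<bar> powr (-1-\<alpha>)"
      using v by (simp add: abs_mult powr_mult)
    have e2: "v powr (1+\<alpha>) * v powr (-1-\<alpha>) = 1"
      using v by (simp add: powr_add[symmetric])
    have "v powr (1+\<alpha>) * LK \<alpha> (0 + v * x) = (v powr (1+\<alpha>) * v powr (-1-\<alpha>)) * ((1 - cos (v * x)) * \<bar>x\<bar> powr (-1-\<alpha>))"
      unfolding LK_def add_0_left e1 by (simp only: mult_ac)
    then show "(1 - cos (v * x)) * \<bar>x\<bar> powr (-1-\<alpha>) = v powr (1+\<alpha>) * LK \<alpha> (0 + v * x)"
      unfolding e2 by simp
  qed
  have i: "integrable lborel (\<lambda>x. LK \<alpha> (0 + v * x))"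
    using lborel_integrable_real_affine[OF LK_integrable[OF a], of v 0] v by simp
  then show "integrable lborel (\<lambda>x. (1 - cos (v * x)) * \<bar>x\<bar> powr (-1-\<alpha>))"
    unfolding eq by simp
  have "(\<integral>x. LK \<alpha> x \<partial>lborel) = v * (\<integral>x. LK \<alpha> (0 + v * x) \<partial>lborel)"
    using lborel_integral_real_affine[of v "LK \<alpha>" 0] v by simp
  moreover have "v powr (1+\<alpha>) = v * v powr \<alpha>"
    using v by (simp add: powr_add)
  ultimately show "(\<integral>x. (1 - cos (v * x)) * \<bar>x\<bar> powr (-1-\<alpha>) \<partial>lborel) = v powr \<alpha> * (\<integral>x. LK \<alpha> x \<partial>lborel)"
    unfolding eq by simp
qed

definition gd :: "real \<Rightarrow> real \<Rightarrow> real \<Rightarrow> real" where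
  "gd \<alpha> \<epsilon> x = \<alpha> / 2 * \<epsilon> powr \<alpha> * (\<bar>x\<bar> powr (-1-\<alpha>) * indicator {\<epsilon>..} \<bar>x\<bar>)"

lemma gd_measurable[measurable]: "gd \<alpha> \<epsilon> \<in> borel_measurable borel"
  unfolding gd_def by measurable

lemma gd_nonneg: "0 < \<alpha> \<Longrightarrow> 0 \<le> gd \<alpha> \<epsilon> x"
  unfolding gd_def by simp

lemma gd_hbi:
  assumes a: "0 < \<alpha>" and e: "0 < \<epsilon>"
  shows "has_bochner_integral lborel (gd \<alpha> \<epsilon>) 1"
proof -
  have t: "has_bochner_integral lborel (\<lambda>x. \<alpha> / 2 * \<epsilon> powr \<alpha> * (indicator {\<epsilon>..} x * x powr (-1-\<alpha>))) (\<alpha> / 2 * \<epsilon> powr \<alpha> * (\<epsilon> powr (-\<alpha>) / \<alpha>))"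
    by (intro has_bochner_integral_mult_right tail_powr a e)
  have q1: "(\<lambda>x. \<alpha> / 2 * \<epsilon> powr \<alpha> * (indicator {\<epsilon>..} x * x powr (-1-\<alpha>))) = (\<lambda>x. indicator {0<..} x * gd \<alpha> \<epsilon> x)"
    using e by (auto simp: fun_eq_iff gd_def indicator_def)
  have q2: "\<alpha> / 2 * \<epsilon> powr \<alpha> * (\<epsilon> powr (-\<alpha>) / \<alpha>) = 1/2"
    using a e by (simp add: powr_minus field_simps)
  have "has_bochner_integral lborel (\<lambda>x. indicator {0<..} x * gd \<alpha> \<epsilon> x) (1/2)"
    using t unfolding q1 q2 .
  then have "has_bochner_integral lborel (gd \<alpha> \<epsilon>) (2 * (1/2))"
    by (rule hbi_even) (use e in \<open>simp_all add: gd_def\<close>)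
  then show ?thesis by simp
qed

definition rho :: "real \<Rightarrow> real \<Rightarrow> real measure" where
  "rho \<alpha> \<epsilon> = density lborel (\<lambda>x. ennreal (gd \<alpha> \<epsilon> x))"

definition chat :: "real \<Rightarrow> real \<Rightarrow> real \<Rightarrow> real" where
  "chat \<alpha> \<epsilon> v = (\<integral>x. gd \<alpha> \<epsilon> x * cos (v * x) \<partial>lborel)"

lemma sets_rho[simp, measurable_cong]: "sets (rho \<alpha> \<epsilon>) = sets borel"
  by (simp add: rho_def)

lemma space_rho[simp]: "space (rho \<alpha> \<epsilon>) = UNIV"
  by (simp add: rho_def)

lemma rho_real_distribution:
  assumes a: "0 < \<alpha>" and e: "0 < \<epsilon>"
  shows "real_distribution (rho \<alpha> \<epsilon>)"
proof -
  have "emeasure (rho \<alpha> \<epsilon>) (space (rho \<alpha> \<epsilon>)) = (\<integral>\<^sup>+ x. ennreal (gd \<alpha> \<epsilon> x) \<partial>lborel)"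
    by (simp add: rho_def emeasure_density)
  also have "\<dots> = ennreal (integral\<^sup>L lborel (gd \<alpha> \<epsilon>))"
    using gd_hbi[OF a e] gd_nonneg[OF a]
    by (intro nn_integral_eq_integral) (auto simp: has_bochner_integral_iff)
  also have "\<dots> = 1" using gd_hbi[OF a e] by (simp add: has_bochner_integral_iff)
  finally have "prob_space (rho \<alpha> \<epsilon>)" by (intro prob_spaceI)
  then show ?thesis by (simp add: real_distribution_def real_distribution_axioms_def)
qed

lemma rho_integral:
  assumes a: "0 < \<alpha>" and [measurable]: "f \<in> borel_measurable borel"
  shows "(\<integral>x. f x \<partial>rho \<alpha> \<epsilon>) = (\<integral>x. gd \<alpha> \<epsilon> x * f x \<partial>lborel)"
  unfolding rho_def
  by (subst integral_density) (use gd_nonneg[OF a] in auto)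

lemma gd_even: "gd \<alpha> \<epsilon> (- x) = gd \<alpha> \<epsilon> x"
  by (simp add: gd_def)

lemma odd_integral_zero:
  fixes f :: "real \<Rightarrow> real"
  assumes "\<And>x. f (- x) = - f x"
  shows "(\<integral>x. f x \<partial>lborel) = 0"
proof -
  have "(\<integral>x. f x \<partial>lborel) = \<bar>-1\<bar> *\<^sub>R (\<integral>x. f (0 + -1 * x) \<partial>lborel)"
    by (rule lborel_integral_real_affine) simp
  also have "\<dots> = - (\<integral>x. f x \<partial>lborel)"
    using assms by simp
  finally show ?thesis by simp
qed

lemma rho_char:
  assumes a: "0 < \<alpha>" and e: "0 < \<epsilon>"
  shows "char (rho \<alpha> \<epsilon>) v = complex_of_real (chat \<alpha> \<epsilon> v)"
proof -
  interpret real_distribution "rho \<alpha> \<epsilon>" by (rule rho_real_distribution[OF a e])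
  have ii: "integrable (rho \<alpha> \<epsilon>) (\<lambda>x. iexp (v * x))"
    by (rule integrable_iexp) auto
  have "Re (char (rho \<alpha> \<epsilon>) v) = (\<integral>x. Re (iexp (v * x)) \<partial>rho \<alpha> \<epsilon>)"
    unfolding char_def using ii by simp
  also have "\<dots> = (\<integral>x. cos (v * x) \<partial>rho \<alpha> \<epsilon>)"
    by (simp add: Re_exp)
  also have "\<dots> = chat \<alpha> \<epsilon> v"
    unfolding chat_def by (rule rho_integral[OF a]) simp
  finally have re: "Re (char (rho \<alpha> \<epsilon>) v) = chat \<alpha> \<epsilon> v" .
  have "Im (char (rho \<alpha> \<epsilon>) v) = (\<integral>x. Im (iexp (v * x)) \<partial>rho \<alpha> \<epsilon>)"
    unfolding char_def using ii by simp
  also have "\<dots> = (\<integral>x. sin (v * x) \<partial>rho \<alpha> \<epsilon>)"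
    by (simp add: Im_exp)
  also have "\<dots> = (\<integral>x. gd \<alpha> \<epsilon> x * sin (v * x) \<partial>lborel)"
    by (rule rho_integral[OF a]) simp
  also have "\<dots> = 0"
    by (rule odd_integral_zero) (simp add: gd_even)
  finally have im: "Im (char (rho \<alpha> \<epsilon>) v) = 0" .
  show ?thesis using re im by (simp add: complex_eq_iff)
qed

lemma chat_bound:
  assumes a: "0 < \<alpha>" and e: "0 < \<epsilon>"
  shows "\<bar>chat \<alpha> \<epsilon> v\<bar> \<le> 1"
proof -
  interpret real_distribution "rho \<alpha> \<epsilon>" by (rule rho_real_distribution[OF a e])
  show ?thesis using cmod_char_le_1[of v] rho_char[OF a e, of v] by simp
qed

lemma chat_measurable[measurable]: "chat \<alpha> \<epsilon> \<in> borel_measurable borel"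
  unfolding chat_def by measurable

lemma prod_cos:
  assumes a: "0 < \<alpha>" and e: "0 < \<epsilon>"
  shows "(\<integral>\<omega>. cos (v * (\<Sum>i<N. \<omega> i)) \<partial>(PiM {..<N} (\<lambda>_. rho \<alpha> \<epsilon>))) = (chat \<alpha> \<epsilon> v) ^ N"
proof -
  interpret R: real_distribution "rho \<alpha> \<epsilon>" by (rule rho_real_distribution[OF a e])
  interpret product_sigma_finite "\<lambda>_::nat. rho \<alpha> \<epsilon>"
    by (simp add: product_sigma_finite_def R.sigma_finite_measure_axioms)
  have "(\<integral>\<omega>. (\<Prod>i\<in>{..<N}. iexp (v * \<omega> i)) \<partial>(PiM {..<N} (\<lambda>_. rho \<alpha> \<epsilon>)))
      = (\<Prod>i\<in>{..<N}. (\<integral>x. iexp (v * x) \<partial>rho \<alpha> \<epsilon>))"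
    by (rule product_integral_prod) (auto intro: R.integrable_iexp)
  also have "\<dots> = complex_of_real (chat \<alpha> \<epsilon> v) ^ N"
    using rho_char[OF a e, of v] by (simp add: char_def)
  finally have P: "(\<integral>\<omega>. (\<Prod>i\<in>{..<N}. iexp (v * \<omega> i)) \<partial>(PiM {..<N} (\<lambda>_. rho \<alpha> \<epsilon>)))
      = complex_of_real (chat \<alpha> \<epsilon> v ^ N)" by simp
  have pi: "integrable (PiM {..<N} (\<lambda>_. rho \<alpha> \<epsilon>)) (\<lambda>\<omega>. \<Prod>i\<in>{..<N}. iexp (v * \<omega> i))"
    by (rule product_integrable_prod) (auto intro: R.integrable_iexp)
  have eq: "cos (v * (\<Sum>i<N. \<omega> i)) = Re (\<Prod>i\<in>{..<N}. iexp (v * \<omega> i))" for \<omega> :: "nat \<Rightarrow> real"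
  proof -
    have "(\<Prod>i\<in>{..<N}. iexp (v * \<omega> i)) = exp (\<Sum>i\<in>{..<N}. \<i> * complex_of_real (v * \<omega> i))"
      by (simp add: exp_sum)
    also have "(\<Sum>i\<in>{..<N}. \<i> * complex_of_real (v * \<omega> i)) = \<i> * complex_of_real (v * (\<Sum>i<N. \<omega> i))"
      by (simp add: sum_distrib_left)
    finally show ?thesis by (simp add: Re_exp)
  qed
  have "(\<integral>\<omega>. cos (v * (\<Sum>i<N. \<omega> i)) \<partial>(PiM {..<N} (\<lambda>_. rho \<alpha> \<epsilon>)))
      = (\<integral>\<omega>. Re (\<Prod>i\<in>{..<N}. iexp (v * \<omega> i)) \<partial>(PiM {..<N} (\<lambda>_. rho \<alpha> \<epsilon>)))"
    by (simp only: eq)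
  also have "\<dots> = Re (\<integral>\<omega>. (\<Prod>i\<in>{..<N}. iexp (v * \<omega> i)) \<partial>(PiM {..<N} (\<lambda>_. rho \<alpha> \<epsilon>)))"
    using pi by simp
  also have "\<dots> = chat \<alpha> \<epsilon> v ^ N" unfolding P by simp
  finally show ?thesis .
qed

lemma Good_chat_pow:
  assumes a: "0 < \<alpha>" and e: "0 < \<epsilon>"
  shows "Good (\<lambda>v. (chat \<alpha> \<epsilon> v) ^ N)"
proof -
  interpret R: real_distribution "rho \<alpha> \<epsilon>" by (rule rho_real_distribution[OF a e])
  interpret product_prob_space "\<lambda>_::nat. rho \<alpha> \<epsilon>" "{..<N}"
    by (simp add: product_prob_space_def product_prob_space_axioms_def product_sigma_finite_def
        R.sigma_finite_measure_axioms R.prob_space_axioms)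
  have "Good (\<lambda>v. \<integral>\<omega>. cos (v * (\<Sum>i<N. \<omega> i)) \<partial>(PiM {..<N} (\<lambda>_. rho \<alpha> \<epsilon>)))"
    by (rule Good_char) (simp_all add: P.prob_space_axioms)
  then show ?thesis using prod_cos[OF a e] by simp
qed

lemma chat_zero:
  assumes a: "0 < \<alpha>" and e: "0 < \<epsilon>"
  shows "chat \<alpha> \<epsilon> 0 = 1"
  using gd_hbi[OF a e] by (simp add: chat_def has_bochner_integral_iff)

lemma chat_one_minus:
  assumes a: "0 < \<alpha>" and e: "0 < \<epsilon>"
  shows "1 - chat \<alpha> \<epsilon> v = \<alpha> / 2 * \<epsilon> powr \<alpha> *
     (\<integral>x. (1 - cos (v * x)) * \<bar>x\<bar> powr (-1-\<alpha>) * indicator {\<epsilon>..} \<bar>x\<bar> \<partial>lborel)"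
proof -
  have gi: "integrable lborel (gd \<alpha> \<epsilon>)" and g1: "integral\<^sup>L lborel (gd \<alpha> \<epsilon>) = 1"
    using gd_hbi[OF a e] by (auto simp: has_bochner_integral_iff)
  have gci: "integrable lborel (\<lambda>x. gd \<alpha> \<epsilon> x * cos (v * x))"
  proof (rule Bochner_Integration.integrable_bound[OF gi])
    show "(\<lambda>x. gd \<alpha> \<epsilon> x * cos (v * x)) \<in> borel_measurable lborel" by measurable
    show "AE x in lborel. norm (gd \<alpha> \<epsilon> x * cos (v * x)) \<le> norm (gd \<alpha> \<epsilon> x)"
      using gd_nonneg[OF a] by (auto simp: abs_mult intro!: mult_left_le)
  qed
  have "1 - chat \<alpha> \<epsilon> v = (\<integral>x. gd \<alpha> \<epsilon> x - gd \<alpha> \<epsilon> x * cos (v * x) \<partial>lborel)"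
    unfolding chat_def using gi gci g1 by (simp add: Bochner_Integration.integral_diff)
  also have "\<dots> = (\<integral>x. \<alpha> / 2 * \<epsilon> powr \<alpha> * ((1 - cos (v * x)) * \<bar>x\<bar> powr (-1-\<alpha>) * indicator {\<epsilon>..} \<bar>x\<bar>) \<partial>lborel)"
    by (intro Bochner_Integration.integral_cong) (auto simp: gd_def algebra_simps)
  also have "\<dots> = \<alpha> / 2 * \<epsilon> powr \<alpha> * (\<integral>x. (1 - cos (v * x)) * \<bar>x\<bar> powr (-1-\<alpha>) * indicator {\<epsilon>..} \<bar>x\<bar> \<partial>lborel)"
    by simp
  finally show ?thesis .
qed

definition epsN :: "real \<Rightarrow> real \<Rightarrow> nat \<Rightarrow> real" where
  "epsN \<alpha> c N = (2 * (2 * c / (\<integral>x. LK \<alpha> x \<partial>lborel)) / \<alpha> / real N) powr (1/\<alpha>)"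

context
  fixes \<alpha> c :: real
  assumes a: "0 < \<alpha>" "\<alpha> < 2" and c: "0 < c"
begin

definition "IL = (\<integral>x. LK \<alpha> x \<partial>lborel)"
definition "\<kappa> = 2 * c / IL"

lemma IL_pos: "0 < IL" unfolding IL_def by (rule LK_pos[OF a])
lemma kappa_pos: "0 < \<kappa>" unfolding \<kappa>_def using IL_pos c by simp

lemma epsN_eq: "epsN \<alpha> c N = (2 * \<kappa> / \<alpha> / real N) powr (1/\<alpha>)"
  unfolding epsN_def \<kappa>_def IL_def ..

lemma epsN_pos: "0 < N \<Longrightarrow> 0 < epsN \<alpha> c N"
  unfolding epsN_eq using kappa_pos a by simp

lemma epsN_pow: "0 < N \<Longrightarrow> \<alpha> / 2 * epsN \<alpha> c N powr \<alpha> = \<kappa> / real N"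
proof -
  assume N: "0 < N"
  have "epsN \<alpha> c N powr \<alpha> = (2 * \<kappa> / \<alpha> / real N) powr (1/\<alpha> * \<alpha>)"
    unfolding epsN_eq powr_powr ..
  also have "\<dots> = 2 * \<kappa> / \<alpha> / real N"
    using a kappa_pos N by simp
  finally show ?thesis using a by simp
qed

lemma epsN_eventually:
  assumes x: "x \<noteq> 0"
  shows "eventually (\<lambda>n. epsN \<alpha> c (Suc n) \<le> \<bar>x\<bar>) sequentially"
proof -
  have "(\<lambda>n. 2 * \<kappa> / \<alpha> / real n) \<longlonglongrightarrow> 0" by (rule lim_const_over_n)
  then have "(\<lambda>n. 2 * \<kappa> / \<alpha> / real (Suc n)) \<longlonglongrightarrow> 0" by (rule LIMSEQ_Suc)
  moreover have "0 < \<bar>x\<bar> powr \<alpha>" using x by simp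
  ultimately have ev: "eventually (\<lambda>n. 2 * \<kappa> / \<alpha> / real (Suc n) < \<bar>x\<bar> powr \<alpha>) sequentially"
    by (rule order_tendstoD(2))
  show ?thesis using ev
  proof eventually_elim
    case (elim n)
    have "epsN \<alpha> c (Suc n) \<le> (\<bar>x\<bar> powr \<alpha>) powr (1/\<alpha>)"
      unfolding epsN_eq using elim a kappa_pos by (intro powr_mono2) auto
    also have "\<dots> = \<bar>x\<bar>" using a by (simp add: powr_powr)
    finally show ?case .
  qed
qed

lemma J_lim:
  assumes v: "0 < v"
  shows "(\<lambda>n. \<integral>x. (1 - cos (v * x)) * \<bar>x\<bar> powr (-1-\<alpha>) * indicator {epsN \<alpha> c (Suc n)..} \<bar>x\<bar> \<partial>lborel)
          \<longlonglongrightarrow> v powr \<alpha> * IL"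
proof -
  have "(\<lambda>n. \<integral>x. (1 - cos (v * x)) * \<bar>x\<bar> powr (-1-\<alpha>) * indicator {epsN \<alpha> c (Suc n)..} \<bar>x\<bar> \<partial>lborel)
          \<longlonglongrightarrow> (\<integral>x. (1 - cos (v * x)) * \<bar>x\<bar> powr (-1-\<alpha>) \<partial>lborel)"
  proof (rule integral_dominated_convergence[where w="\<lambda>x. (1 - cos (v * x)) * \<bar>x\<bar> powr (-1-\<alpha>)"])
    show "(\<lambda>x. (1 - cos (v * x)) * \<bar>x\<bar> powr (-1-\<alpha>)) \<in> borel_measurable lborel" by measurable
    show "(\<lambda>x. (1 - cos (v * x)) * \<bar>x\<bar> powr (-1-\<alpha>) * indicator {epsN \<alpha> c (Suc n)..} \<bar>x\<bar>) \<in> borel_measurable lborel" for n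
      by measurable
    show "integrable lborel (\<lambda>x. (1 - cos (v * x)) * \<bar>x\<bar> powr (-1-\<alpha>))"
      by (rule LK_scale(1)[OF a v])
    show "AE x in lborel. (\<lambda>n. (1 - cos (v * x)) * \<bar>x\<bar> powr (-1-\<alpha>) * indicator {epsN \<alpha> c (Suc n)..} \<bar>x\<bar>)
            \<longlonglongrightarrow> (1 - cos (v * x)) * \<bar>x\<bar> powr (-1-\<alpha>)"
    proof (rule AE_I2)
      fix x :: real
      show "(\<lambda>n. (1 - cos (v * x)) * \<bar>x\<bar> powr (-1-\<alpha>) * indicator {epsN \<alpha> c (Suc n)..} \<bar>x\<bar>)
            \<longlonglongrightarrow> (1 - cos (v * x)) * \<bar>x\<bar> powr (-1-\<alpha>)"
      proof (cases "x = 0")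
        case True then show ?thesis by simp
      next
        case False
        have "eventually (\<lambda>n. (1 - cos (v * x)) * \<bar>x\<bar> powr (-1-\<alpha>) * indicator {epsN \<alpha> c (Suc n)..} \<bar>x\<bar>
                 = (1 - cos (v * x)) * \<bar>x\<bar> powr (-1-\<alpha>)) sequentially"
          using epsN_eventually[OF False] by eventually_elim simp
        then show ?thesis by (rule tendsto_eventually)
      qed
    qed
    show "AE x in lborel. norm ((1 - cos (v * x)) * \<bar>x\<bar> powr (-1-\<alpha>) * indicator {epsN \<alpha> c (Suc n)..} \<bar>x\<bar>)
            \<le> (1 - cos (v * x)) * \<bar>x\<bar> powr (-1-\<alpha>)" for n
      by (rule AE_I2) (auto simp: indicator_def abs_mult)
  qed
  then show ?thesis using LK_scale(2)[OF a v] by (simp add: IL_def)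
qed

lemma z_lim:
  assumes v: "0 < v"
  shows "(\<lambda>n. real (Suc n) * (1 - chat \<alpha> (epsN \<alpha> c (Suc n)) v)) \<longlonglongrightarrow> 2 * c * v powr \<alpha>"
proof -
  have eq: "real (Suc n) * (1 - chat \<alpha> (epsN \<alpha> c (Suc n)) v) =
     \<kappa> * (\<integral>x. (1 - cos (v * x)) * \<bar>x\<bar> powr (-1-\<alpha>) * indicator {epsN \<alpha> c (Suc n)..} \<bar>x\<bar> \<partial>lborel)" for n
  proof -
    have "real (Suc n) * (1 - chat \<alpha> (epsN \<alpha> c (Suc n)) v) = real (Suc n) * (\<alpha> / 2 * epsN \<alpha> c (Suc n) powr \<alpha>) *
      (\<integral>x. (1 - cos (v * x)) * \<bar>x\<bar> powr (-1-\<alpha>) * indicator {epsN \<alpha> c (Suc n)..} \<bar>x\<bar> \<partial>lborel)"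
    proof -
      have h: "1 - chat \<alpha> (epsN \<alpha> c (Suc n)) v = \<alpha> / 2 * epsN \<alpha> c (Suc n) powr \<alpha> *
        (\<integral>x. (1 - cos (v * x)) * \<bar>x\<bar> powr (-1-\<alpha>) * indicator {epsN \<alpha> c (Suc n)..} \<bar>x\<bar> \<partial>lborel)"
        by (rule chat_one_minus[OF a(1) epsN_pos]) simp
      show ?thesis unfolding h by (simp only: mult.assoc)
    qed
    also have "real (Suc n) * (\<alpha> / 2 * epsN \<alpha> c (Suc n) powr \<alpha>) = \<kappa>"
    proof -
      have "\<alpha> / 2 * epsN \<alpha> c (Suc n) powr \<alpha> = \<kappa> / real (Suc n)" by (rule epsN_pow) simp
      then show ?thesis by (simp add: field_simps)
    qed
    finally show ?thesis .
  qed
  have "(\<lambda>n. \<kappa> * (\<integral>x. (1 - cos (v * x)) * \<bar>x\<bar> powr (-1-\<alpha>) * indicator {epsN \<alpha> c (Suc n)..} \<bar>x\<bar> \<partial>lborel))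
     \<longlonglongrightarrow> \<kappa> * (v powr \<alpha> * IL)"
    by (intro tendsto_mult tendsto_const J_lim v)
  moreover have "\<kappa> * (v powr \<alpha> * IL) = 2 * c * v powr \<alpha>"
    using IL_pos by (simp add: \<kappa>_def)
  ultimately show ?thesis unfolding eq by simp
qed

lemma phi_lim:
  assumes v: "0 \<le> v"
  shows "(\<lambda>n. chat \<alpha> (epsN \<alpha> c (Suc n)) v ^ Suc n) \<longlonglongrightarrow> exp (- 2 * c * v powr \<alpha>)"
proof (cases "v = 0")
  case True
  then show ?thesis using chat_zero[OF a(1) epsN_pos] by simp
next
  case False
  with v have v: "0 < v" by simp
  define L where "L = 2 * c * v powr \<alpha>"
  have L: "0 \<le> L" using c by (simp add: L_def)
  define z where "z n = real (Suc n) * (1 - chat \<alpha> (epsN \<alpha> c (Suc n)) v)" for n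
  have zl: "z \<longlonglongrightarrow> L" unfolding z_def L_def by (rule z_lim[OF v])
  have b: "(\<lambda>n. (1 + (- L) / real (Suc n)) ^ Suc n) \<longlonglongrightarrow> exp (- L)"
    using LIMSEQ_Suc[OF tendsto_exp_limit_sequentially[of "-L"]] by simp
  have "(\<lambda>n. chat \<alpha> (epsN \<alpha> c (Suc n)) v ^ Suc n - (1 + (- L) / real (Suc n)) ^ Suc n) \<longlonglongrightarrow> 0"
  proof (rule Lim_null_comparison)
    show "(\<lambda>n. \<bar>L - z n\<bar>) \<longlonglongrightarrow> 0"
      using tendsto_rabs[OF tendsto_diff[OF tendsto_const[of L] zl]] by simp
    have "eventually (\<lambda>n. L \<le> 2 * real (Suc n)) sequentially"
      using eventually_ge_at_top[of "nat \<lceil>L\<rceil>"]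
    proof eventually_elim
      case (elim n)
      then have "real (nat \<lceil>L\<rceil>) \<le> real n" by simp
      then have "L \<le> real n" by (rule order_trans[OF real_nat_ceiling_ge])
      moreover have "real n \<le> 2 * real (Suc n)" by simp
      ultimately show ?case by (rule order_trans)
    qed
    then show "eventually (\<lambda>n. norm (chat \<alpha> (epsN \<alpha> c (Suc n)) v ^ Suc n - (1 + (- L) / real (Suc n)) ^ Suc n) \<le> \<bar>L - z n\<bar>) sequentially"
    proof eventually_elim
      case (elim n)
      define N where "N = real (Suc n)"
      have N: "0 < N" by (simp add: N_def)
      have c1: "norm (chat \<alpha> (epsN \<alpha> c (Suc n)) v) \<le> 1"
        using chat_bound[OF a(1) epsN_pos[of "Suc n"]] by simp
      have c2: "norm (1 + (- L) / N) \<le> 1"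
        using elim L N unfolding N_def by (auto simp: abs_le_iff field_simps)
      have pd: "norm (chat \<alpha> (epsN \<alpha> c (Suc n)) v ^ Suc n - (1 + (- L) / N) ^ Suc n)
          \<le> real (Suc n) * norm (chat \<alpha> (epsN \<alpha> c (Suc n)) v - (1 + (- L) / N))"
        by (rule norm_power_diff[OF c1 c2])
      have ce: "chat \<alpha> (epsN \<alpha> c (Suc n)) v = 1 - z n / N"
        using N by (simp add: z_def N_def)
      have eqL: "real (Suc n) * norm (chat \<alpha> (epsN \<alpha> c (Suc n)) v - (1 + (- L) / N)) = \<bar>L - z n\<bar>"
      proof -
        have "1 - z n / N - (1 + (- L) / N) = (L - z n) / N"
          using N by (simp add: field_simps)
        then have "norm (1 - z n / N - (1 + (- L) / N)) = \<bar>L - z n\<bar> / N"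
          using N by simp
        then show ?thesis unfolding ce by (simp add: N_def)
      qed
      have "norm (chat \<alpha> (epsN \<alpha> c (Suc n)) v ^ Suc n - (1 + (- L) / N) ^ Suc n) \<le> \<bar>L - z n\<bar>"
        using pd unfolding eqL .
      then show ?case unfolding N_def .
    qed
  qed
  then have "(\<lambda>n. chat \<alpha> (epsN \<alpha> c (Suc n)) v ^ Suc n) \<longlonglongrightarrow> exp (- L)"
    by (rule Lim_transform[OF b])
  then show ?thesis by (simp add: L_def)
qed

lemma Good_stable_lt2: "Good (\<lambda>v. exp (- 2 * c * v powr \<alpha>))"
proof (rule Good_lim[where \<phi>s="\<lambda>n v. chat \<alpha> (epsN \<alpha> c (Suc n)) v ^ Suc n"])
  show "Good (\<lambda>v. chat \<alpha> (epsN \<alpha> c (Suc n)) v ^ Suc n)" for n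
    by (rule Good_chat_pow[OF a(1) epsN_pos]) simp
  show "\<bar>chat \<alpha> (epsN \<alpha> c (Suc n)) v ^ Suc n\<bar> \<le> 1" for n v
    unfolding power_abs using chat_bound[OF a(1) epsN_pos[of "Suc n"]]
    by (intro power_le_one) auto
  show "(\<lambda>n. chat \<alpha> (epsN \<alpha> c (Suc n)) v ^ Suc n) \<longlonglongrightarrow> exp (- 2 * c * v powr \<alpha>)" if "0 \<le> v" for v
    by (rule phi_lim[OF that])
  show "(\<lambda>v. chat \<alpha> (epsN \<alpha> c (Suc n)) v ^ Suc n) \<in> borel_measurable borel" for n
    by measurable
  show "(\<lambda>v. exp (- 2 * c * v powr \<alpha>)) \<in> borel_measurable borel"
    by measurable
qed

end

lemma H_cong:
  assumes "\<And>v. 0 \<le> v \<Longrightarrow> \<phi> v = \<psi> v" and s: "0 \<le> s"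
  shows "H \<phi> s = H \<psi> s"
proof (cases "s = 0")
  case True then show ?thesis by (simp add: H_def)
next
  case False
  with s have s: "0 < s" by simp
  have e: "kk u * (1 - \<phi> (u / s)) = kk u * (1 - \<psi> (u / s))" for u
  proof (cases "0 \<le> u")
    case True then show ?thesis using assms(1)[of "u/s"] s by simp
  next
    case False then show ?thesis by (simp add: kk_def)
  qed
  show ?thesis unfolding H_def by (simp only: e)
qed

lemma Good_cong:
  assumes "\<And>v. 0 \<le> v \<Longrightarrow> \<phi> v = \<psi> v" and "Good \<phi>"
  shows "Good \<psi>"
  unfolding Good_def
proof (intro allI impI)
  fix s r u :: real assume h: "0 \<le> s" "0 \<le> r" "0 \<le> u"
  have e: "H \<phi> t = H \<psi> t" if "0 \<le> t" for t by (rule H_cong[OF assms(1) that])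
  have "H \<phi> (r+s+u) + H \<phi> u \<le> H \<phi> (r+u) + H \<phi> (s+u)"
    using assms(2) h unfolding Good_def by blast
  then show "H \<psi> (r+s+u) + H \<psi> u \<le> H \<psi> (r+u) + H \<psi> (s+u)"
    using h by (simp add: e)
qed

lemma Good_gauss:
  assumes c: "0 < c"
  shows "Good (\<lambda>v. exp (- 2 * c * v powr 2))"
proof -
  interpret N: real_distribution std_normal_distribution by (rule real_dist_normal_dist)
  define k where "k = 2 * sqrt c"
  have G: "Good (\<lambda>v. \<integral>\<omega>. cos (v * (k * \<omega>)) \<partial>std_normal_distribution)"
    by (rule Good_char) (simp_all add: N.prob_space_axioms)
  have eq: "(\<integral>\<omega>. cos (v * (k * \<omega>)) \<partial>std_normal_distribution) = exp (- 2 * c * v powr 2)" if v: "0 \<le> v" for v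
  proof -
    have ii: "integrable std_normal_distribution (\<lambda>x. iexp ((v * k) * x))"
      by (rule N.integrable_iexp) auto
    have "(\<integral>\<omega>. cos (v * (k * \<omega>)) \<partial>std_normal_distribution)
        = (\<integral>\<omega>. Re (iexp ((v * k) * \<omega>)) \<partial>std_normal_distribution)"
      by (simp add: Re_exp mult.assoc)
    also have "\<dots> = Re (char std_normal_distribution (v * k))"
      unfolding char_def using ii by simp
    also have "\<dots> = exp (- ((v * k)\<^sup>2) / 2)"
      by (simp add: char_std_normal_distribution)
    also have "(v * k)\<^sup>2 = 4 * c * v\<^sup>2"
      using c by (simp add: k_def power_mult_distrib)
    also have "v\<^sup>2 = v powr 2" using v by simp
    finally show ?thesis by simp
  qed
  show ?thesis by (rule Good_cong[OF eq G])
qed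

lemma Good_target:
  assumes a: "0 < \<alpha>" "\<alpha> \<le> 2" and c: "0 < c"
  shows "Good (\<lambda>v. exp (- 2 * c * v powr \<alpha>))"
proof (cases "\<alpha> = 2")
  case True then show ?thesis using Good_gauss[OF c] by simp
next
  case False
  with a have "\<alpha> < 2" by simp
  then show ?thesis by (rule Good_stable_lt2[OF a(1) _ c])
qed

lemma f_fun_H:
  assumes a0: "0 < \<alpha>" and c: "0 < c" and s: "0 \<le> s"
  shows "f_fun \<alpha> c a s = 4 / (a * pi) * H (\<lambda>v. exp (- 2 * c * v powr \<alpha>)) s"
proof (cases "s = 0")
  case True then show ?thesis by (simp add: f_fun_def H_def)
next
  case False
  with s have s: "0 < s" by simp
  define F where "F u = (sin (u / 2))\<^sup>2 / u\<^sup>2 * (1 - exp (- 2 * c * (u / s) powr \<alpha>))" for u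
  have eqk: "indicator {0..} u *\<^sub>R F u = kk u * (1 - exp (- 2 * c * (u / s) powr \<alpha>))" for u
    by (cases "0 < u") (auto simp: F_def kk_def indicator_def)
  have int: "integrable lborel (\<lambda>u. kk u * (1 - exp (- 2 * c * (u / s) powr \<alpha>)))"
  proof (rule Bochner_Integration.integrable_bound)
    show "integrable lborel (\<lambda>u. kk u)" by (rule kk_integrable)
    show "(\<lambda>u. kk u * (1 - exp (- 2 * c * (u / s) powr \<alpha>))) \<in> borel_measurable lborel" by measurable
    show "AE u in lborel. norm (kk u * (1 - exp (- 2 * c * (u / s) powr \<alpha>))) \<le> norm (kk u)"
    proof (rule AE_I2)
      fix u :: real
      show "norm (kk u * (1 - exp (- 2 * c * (u / s) powr \<alpha>))) \<le> norm (kk u)"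
      proof (cases "0 < u")
        case True
        have "0 \<le> 2 * c * (u / s) powr \<alpha>" using c by simp
        then have "exp (- 2 * c * (u / s) powr \<alpha>) \<le> 1" by simp
        moreover have "0 < exp (- 2 * c * (u / s) powr \<alpha>)" by simp
        ultimately have "\<bar>1 - exp (- 2 * c * (u / s) powr \<alpha>)\<bar> \<le> 1" by simp
        then show ?thesis using kk_nonneg[of u]
          by (simp add: abs_mult mult_left_le)
      next
        case False then show ?thesis by (simp add: kk_def)
      qed
    qed
  qed
  have si: "set_integrable lborel {0..} F"
    unfolding set_integrable_def eqk by (rule int)
  have "integral {0..} F = (LINT u:{0..}|lborel. F u)"
    using set_borel_integral_eq_integral(2)[OF si] by simp
  also have "\<dots> = (\<integral>u. kk u * (1 - exp (- 2 * c * (u / s) powr \<alpha>)) \<partial>lborel)"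
    unfolding set_lebesgue_integral_def eqk ..
  finally have I: "integral {0..} F = (\<integral>u. kk u * (1 - exp (- 2 * c * (u / s) powr \<alpha>)) \<partial>lborel)" .
  have "f_fun \<alpha> c a s = 4 * s / (a * pi) * integral {0..} F"
    unfolding f_fun_def F_def by (rule if_not_P[OF False])
  also have "\<dots> = 4 / (a * pi) * H (\<lambda>v. exp (- 2 * c * v powr \<alpha>)) s"
    unfolding I H_def by simp
  finally show ?thesis .
qed

lemma f_fun_concave:
  assumes a0: "0 < \<alpha>" "\<alpha> \<le> 2" and c: "0 < c" and a: "0 < a"
    and h: "0 \<le> s" "0 \<le> r" "0 \<le> u"
  shows "f_fun \<alpha> c a (r+s+u) + f_fun \<alpha> c a u \<le> f_fun \<alpha> c a (r+u) + f_fun \<alpha> c a (s+u)"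
proof -
  let ?\<phi> = "\<lambda>v. exp (- 2 * c * v powr \<alpha>)"
  have G: "H ?\<phi> (r+s+u) + H ?\<phi> u \<le> H ?\<phi> (r+u) + H ?\<phi> (s+u)"
    using Good_target[OF a0 c] h unfolding Good_def by blast
  have k: "0 \<le> 4 / (a * pi)" using a by simp
  have "4 / (a * pi) * (H ?\<phi> (r+s+u) + H ?\<phi> u) \<le> 4 / (a * pi) * (H ?\<phi> (r+u) + H ?\<phi> (s+u))"
    by (rule mult_left_mono[OF G k])
  then show ?thesis using h
    by (simp add: f_fun_H[OF a0(1) c] distrib_left)
qed

lemma covar_diff:
  fixes M :: "'w measure" and X Y Z W :: "'w \<Rightarrow> real"
  assumes P: "prob_space M"
    and m: "X \<in> borel_measurable M" "Y \<in> borel_measurable M" "Z \<in> borel_measurable M" "W \<in> borel_measurable M"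
    and sq: "integrable M (\<lambda>x. (X x)\<^sup>2)" "integrable M (\<lambda>x. (Y x)\<^sup>2)" "integrable M (\<lambda>x. (Z x)\<^sup>2)" "integrable M (\<lambda>x. (W x)\<^sup>2)"
    and z: "integral\<^sup>L M X = 0" "integral\<^sup>L M Y = 0" "integral\<^sup>L M Z = 0" "integral\<^sup>L M W = 0"
  shows "covar M (\<lambda>x. X x - Y x) (\<lambda>x. Z x - W x) = covar M X Z - covar M X W - covar M Y Z + covar M Y W"
proof -
  interpret prob_space M by fact
  have i1: "integrable M V" if "V \<in> borel_measurable M" "integrable M (\<lambda>x. (V x)\<^sup>2)" for V :: "'w \<Rightarrow> real"
    by (rule square_integrable_imp_integrable[OF that])
  have ip: "integrable M (\<lambda>x. U x * V x)"
    if "U \<in> borel_measurable M" "integrable M (\<lambda>x. (U x)\<^sup>2)" "V \<in> borel_measurable M" "integrable M (\<lambda>x. (V x)\<^sup>2)"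
    for U V :: "'w \<Rightarrow> real"
  proof (rule Bochner_Integration.integrable_bound)
    show "integrable M (\<lambda>x. (U x)\<^sup>2 + (V x)\<^sup>2)" by (rule Bochner_Integration.integrable_add[OF that(2) that(4)])
    show "(\<lambda>x. U x * V x) \<in> borel_measurable M" using that by measurable
    show "AE x in M. norm (U x * V x) \<le> norm ((U x)\<^sup>2 + (V x)\<^sup>2)"
    proof (rule AE_I2)
      fix x
      have "2 * \<bar>U x\<bar> * \<bar>V x\<bar> \<le> (U x)\<^sup>2 + (V x)\<^sup>2"
        using sum_squares_bound[of "\<bar>U x\<bar>" "\<bar>V x\<bar>"] by simp
      moreover have "0 \<le> \<bar>U x\<bar> * \<bar>V x\<bar>" by simp
      ultimately have "\<bar>U x\<bar> * \<bar>V x\<bar> \<le> (U x)\<^sup>2 + (V x)\<^sup>2" by linarith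
      moreover have "0 \<le> (U x)\<^sup>2 + (V x)\<^sup>2" by simp
      ultimately show "norm (U x * V x) \<le> norm ((U x)\<^sup>2 + (V x)\<^sup>2)"
        by (simp add: abs_mult)
    qed
  qed
  have iX: "integrable M X" and iY: "integrable M Y" and iZ: "integrable M Z" and iW: "integrable M W"
    using i1[OF m(1) sq(1)] i1[OF m(2) sq(2)] i1[OF m(3) sq(3)] i1[OF m(4) sq(4)] by auto
  have cv: "covar M U V = integral\<^sup>L M (\<lambda>x. U x * V x)" if "integral\<^sup>L M U = 0" "integral\<^sup>L M V = 0" for U V
    using that by (simp add: covar_def)
  have d1: "integral\<^sup>L M (\<lambda>x. X x - Y x) = 0" using iX iY z by simp
  have d2: "integral\<^sup>L M (\<lambda>x. Z x - W x) = 0" using iZ iW z by simp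
  have e: "(\<lambda>x. (X x - Y x) * (Z x - W x)) = (\<lambda>x. X x * Z x - X x * W x - Y x * Z x + Y x * W x)"
    by (auto simp: fun_eq_iff algebra_simps)
  have "covar M (\<lambda>x. X x - Y x) (\<lambda>x. Z x - W x) = integral\<^sup>L M (\<lambda>x. X x * Z x - X x * W x - Y x * Z x + Y x * W x)"
    unfolding cv[OF d1 d2] e ..
  also have "\<dots> = integral\<^sup>L M (\<lambda>x. X x * Z x) - integral\<^sup>L M (\<lambda>x. X x * W x) - integral\<^sup>L M (\<lambda>x. Y x * Z x) + integral\<^sup>L M (\<lambda>x. Y x * W x)"
    using ip[OF m(1) sq(1) m(3) sq(3)] ip[OF m(1) sq(1) m(4) sq(4)] ip[OF m(2) sq(2) m(3) sq(3)] ip[OF m(2) sq(2) m(4) sq(4)]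
    by (simp add: Bochner_Integration.integral_add Bochner_Integration.integral_diff)
  also have "\<dots> = covar M X Z - covar M X W - covar M Y Z + covar M Y W"
    using z by (simp add: cv)
  finally show ?thesis .
qed

lemma lin1: "A - (A + B - C) / 2 - (A + B - C) / 2 + B = (C::real)"
  by (simp add: field_simps)

lemma lin2: "(A + B - C) / 2 - (A + D - E) / 2 - (D + B - R) / 2 + D = (E + R - C) / (2::real)"
  by (simp add: field_simps)

lemma lin3: "(A + B - C) / 2 - (A + D - E) / 2 - 0 + 0 = (B + E - C - D) / (2::real)"
  by (simp add: field_simps)

theorem proposition3p13:
  fixes M :: "'w measure" and G :: "real \<Rightarrow> 'w \<Rightarrow> real" and \<alpha> c a :: real
  assumes "prob_space M"
    and "0 < \<alpha>" and "\<alpha> \<le> 2" and "0 < c" and "0 < a"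
    and "centered_gaussian_process M G"
    and "\<And>s r. 0 \<le> s \<Longrightarrow> 0 \<le> r \<Longrightarrow> covar M (G s) (G r) = G_cov \<alpha> c a s r"
  shows "(\<forall>s\<ge>0. \<forall>r\<ge>0. prob_space.variance M (\<lambda>x. G s x - G r x) = f_fun \<alpha> c a \<bar>s - r\<bar>)
    \<and> (\<forall>h\<ge>0. \<forall>s\<ge>0. \<forall>r\<ge>0.
         covar M (\<lambda>x. G (s + h) x - G h x) (\<lambda>x. G (r + h) x - G h x)
       = covar M (\<lambda>x. G s x - G 0 x) (\<lambda>x. G r x - G 0 x))
    \<and> (\<forall>s\<ge>0. \<forall>r\<ge>0. \<forall>u\<ge>0.
         covar M (\<lambda>x. G s x - G 0 x) (\<lambda>x. G (r + s + u) x - G (s + u) x) \<le> 0)"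
proof -
  note P = assms(1)
  have Gp: "G t \<in> borel_measurable M \<and> integrable M (\<lambda>x. (G t x)\<^sup>2) \<and> integral\<^sup>L M (G t) = 0" if "0 \<le> t" for t
    using assms(6) that unfolding centered_gaussian_process_def by blast
  define F where "F = f_fun \<alpha> c a"
  have F0: "F 0 = 0" by (simp add: F_def f_fun_def)
  have C: "covar M (G s) (G r) = (F s + F r - F \<bar>s - r\<bar>) / 2" if "0 \<le> s" "0 \<le> r" for s r
    using assms(7)[OF that] by (simp add: G_cov_def F_def)
  have CD: "covar M (\<lambda>x. G p x - G q x) (\<lambda>x. G p' x - G q' x)
      = covar M (G p) (G p') - covar M (G p) (G q') - covar M (G q) (G p') + covar M (G q) (G q')"
    if "0 \<le> p" "0 \<le> q" "0 \<le> p'" "0 \<le> q'" for p q p' q'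
    using Gp[OF that(1)] Gp[OF that(2)] Gp[OF that(3)] Gp[OF that(4)]
    by (intro covar_diff[OF P]) auto
  have Css: "covar M (G s) (G s) = F s" if "0 \<le> s" for s
    using C[OF that that] F0 by simp
  have C0: "covar M (G 0) (G s) = 0" if "0 \<le> s" for s
    using C[of 0 s] that F0 by simp
  have C0': "covar M (G s) (G 0) = 0" if "0 \<le> s" for s
    using C[of s 0] that F0 by simp
  have part1: "\<forall>s\<ge>0. \<forall>r\<ge>0. prob_space.variance M (\<lambda>x. G s x - G r x) = f_fun \<alpha> c a \<bar>s - r\<bar>"
  proof (intro allI impI)
    fix s r :: real assume h: "0 \<le> s" "0 \<le> r"
    have c1: "covar M (G s) (G r) = (F s + F r - F \<bar>s - r\<bar>) / 2" by (rule C[OF h])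
    have c2: "covar M (G r) (G s) = (F s + F r - F \<bar>s - r\<bar>) / 2"
      using C[OF h(2) h(1)] by (simp add: abs_minus_commute)
    have "prob_space.variance M (\<lambda>x. G s x - G r x) = covar M (\<lambda>x. G s x - G r x) (\<lambda>x. G s x - G r x)"
      by (simp add: covar_def power2_eq_square)
    also have "\<dots> = covar M (G s) (G s) - covar M (G s) (G r) - covar M (G r) (G s) + covar M (G r) (G r)"
      using h by (intro CD) auto
    also have "\<dots> = F \<bar>s - r\<bar>"
      unfolding c1 c2 Css[OF h(1)] Css[OF h(2)] by (rule lin1)
    finally show "prob_space.variance M (\<lambda>x. G s x - G r x) = f_fun \<alpha> c a \<bar>s - r\<bar>"
      by (simp add: F_def)
  qed
  have inc: "covar M (\<lambda>x. G (s + h) x - G h x) (\<lambda>x. G (r + h) x - G h x) = (F s + F r - F \<bar>s - r\<bar>) / 2"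
    if hh: "0 \<le> h" "0 \<le> s" "0 \<le> r" for h s r
  proof -
    have c1: "covar M (G (s+h)) (G (r+h)) = (F (s+h) + F (r+h) - F \<bar>s - r\<bar>) / 2"
      using C[of "s+h" "r+h"] hh by simp
    have c2: "covar M (G (s+h)) (G h) = (F (s+h) + F h - F s) / 2"
      using C[of "s+h" h] hh by simp
    have c3: "covar M (G h) (G (r+h)) = (F h + F (r+h) - F r) / 2"
      using C[of h "r+h"] hh by simp
    have "covar M (\<lambda>x. G (s + h) x - G h x) (\<lambda>x. G (r + h) x - G h x)
        = covar M (G (s+h)) (G (r+h)) - covar M (G (s+h)) (G h) - covar M (G h) (G (r+h)) + covar M (G h) (G h)"
      using hh by (intro CD) auto
    also have "\<dots> = (F s + F r - F \<bar>s - r\<bar>) / 2"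
      unfolding c1 c2 c3 Css[OF hh(1)] by (rule lin2)
    finally show ?thesis .
  qed
  have part2: "\<forall>h\<ge>0. \<forall>s\<ge>0. \<forall>r\<ge>0.
         covar M (\<lambda>x. G (s + h) x - G h x) (\<lambda>x. G (r + h) x - G h x)
       = covar M (\<lambda>x. G s x - G 0 x) (\<lambda>x. G r x - G 0 x)"
  proof (intro allI impI)
    fix h s r :: real assume hh: "0 \<le> h" "0 \<le> s" "0 \<le> r"
    show "covar M (\<lambda>x. G (s + h) x - G h x) (\<lambda>x. G (r + h) x - G h x)
       = covar M (\<lambda>x. G s x - G 0 x) (\<lambda>x. G r x - G 0 x)"
      using inc[OF hh] inc[of 0 s r] hh by simp
  qed
  have part3: "\<forall>s\<ge>0. \<forall>r\<ge>0. \<forall>u\<ge>0.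
         covar M (\<lambda>x. G s x - G 0 x) (\<lambda>x. G (r + s + u) x - G (s + u) x) \<le> 0"
  proof (intro allI impI)
    fix s r u :: real assume hh: "0 \<le> s" "0 \<le> r" "0 \<le> u"
    have c1: "covar M (G s) (G (r+s+u)) = (F s + F (r+s+u) - F (r+u)) / 2"
    proof -
      have "\<bar>s - (r+s+u)\<bar> = r + u" using hh by simp
      then show ?thesis using C[of s "r+s+u"] hh by (simp add: add.commute)
    qed
    have c2: "covar M (G s) (G (s+u)) = (F s + F (s+u) - F u) / 2"
    proof -
      have "\<bar>s - (s+u)\<bar> = u" using hh by simp
      then show ?thesis using C[of s "s+u"] hh by simp
    qed
    have "covar M (\<lambda>x. G s x - G 0 x) (\<lambda>x. G (r + s + u) x - G (s + u) x)
      = covar M (G s) (G (r+s+u)) - covar M (G s) (G (s+u)) - covar M (G 0) (G (r+s+u)) + covar M (G 0) (G (s+u))"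
      using hh by (intro CD) auto
    also have "\<dots> = (F (r+s+u) + F u - F (r+u) - F (s+u)) / 2"
    proof -
      have z1: "covar M (G 0) (G (r+s+u)) = 0" using hh by (intro C0) simp
      have z2: "covar M (G 0) (G (s+u)) = 0" using hh by (intro C0) simp
      show ?thesis unfolding c1 c2 z1 z2 by (rule lin3)
    qed
    also have "\<dots> \<le> 0"
      using f_fun_concave[OF assms(2,3,4,5) hh] by (simp add: F_def)
    finally show "covar M (\<lambda>x. G s x - G 0 x) (\<lambda>x. G (r + s + u) x - G (s + u) x) \<le> 0" .
  qed
  show ?thesis using part1 part2 part3 by blast
qed

end
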